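(* In the setting described in the context (with $L=[0,1]$), let $q\in\{1,\dots,n\}$ and assume there exists $A\subseteq\mathcal C$ with $|A|=n-q$ and $\nu_q(A)=0$. Then $$\min_{\mu\ q\text{-minitive capacity}}\ \max_{1\le k\le N}|S_\mu(x^{(k)})-\alpha^{(k)}|=\nabla_q,$$ where the minimum is over all $q$-minitive capacities $\mu:2^{\mathcal C}\to[0,1]$ (and is attained).
   Context: Let $\mathcal C=\{1,\dots,n\}$ and $L=[0,1]$. A capacity is a map $\mu:2^{\mathcal C}\to[0,1]$ with $\mu(\emptyset)=0$, $\mu(\mathcal C)=1$, monotone for inclusion; it is $q$-minitive if for all $X$ with $|X|<n-q$, $\mu(X)=\min_{Y\supsetneq X,\ |Y|\ge n-q}\mu(Y)$. Sugeno integral: $S_\mu(x)=\max_{A\subseteq\mathcal C}\min(\min_{i\in A}x_i,\mu(A))$ with $\min_{i\in\emptyset}x_i=1$. Training data: $N$ pairs $(x^{(k)},\alpha^{(k)})$, $x^{(k)}\in[0,1]^n$, $\alpha^{(k)}\in[0,1]$. For $A\subsetneq\mathcal C$, $\gamma_{k,A}=\max_{i\in\mathcal C\setminus A}x^{(k)}_i$. Write $t^+=\max(t,0)$. For $1\le i\le N$ and $A\subsetneq\mathcal C$ with $|A|\ge n-q$, let $\sigma_\epsilon(\alpha^{(i)},\gamma_{l,A},\alpha^{(l)})=\min\big(\tfrac{(\alpha^{(l)}-\alpha^{(i)})^+}{2},(\alpha^{(l)}-\gamma_{l,A})^+\big)$, $\nabla_{i,A}=\max\big((\gamma_{i,A}-\alpha^{(i)})^+,\max_{1\le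 l\le N}\sigma_\epsilon(\alpha^{(i)},\gamma_{l,A},\alpha^{(l)})\big)$, $\nabla_i=\min_{A\subsetneq\mathcal C,\ |A|\ge n-q}\nabla_{i,A}$, and $\nabla_q=\max_{1\le i\le N}\nabla_i$. For $A\subsetneq\mathcal C$ with $|A|\ge n-q$, $\nu_q(A)=\max_{1\le k\le N}\big(\gamma_{k,A}\,\epsilon\,\max(\alpha^{(k)}-\nabla_q,0)\big)$, where $a\,\epsilon\,b=b$ if $a<b$ and $a\,\epsilon\,b=0$ if $a\ge b$. *)

theory Defs
  imports Complex_Main
begin

text \<open>Criteria set C = {1..n}. Training data: x k i (k-th example, i-th criterion),
  alpha k, for k in {1..N}. All values are reals.\<close>

definition capacity :: "nat \<Rightarrow> (nat set \<Rightarrow> real) \<Rightarrow> bool" where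
  "capacity n \<mu> \<longleftrightarrow> \<mu> {} = 0 \<and> \<mu> {1..n} = 1 \<and>
     (\<forall>A. A \<subseteq> {1..n} \<longrightarrow> 0 \<le> \<mu> A \<and> \<mu> A \<le> 1) \<and>
     (\<forall>A B. A \<subseteq> B \<and> B \<subseteq> {1..n} \<longrightarrow> \<mu> A \<le> \<mu> B)"

definition q_minitive :: "nat \<Rightarrow> nat \<Rightarrow> (nat set \<Rightarrow> real) \<Rightarrow> bool" where
  "q_minitive n q \<mu> \<longleftrightarrow>
     (\<forall>X. X \<subseteq> {1..n} \<and> card X < n - q \<longrightarrow>
        \<mu> X = Min {\<mu> Y | Y. X \<subset> Y \<and> Y \<subseteq> {1..n} \<and> n - q \<le> card Y})"

definition min_on :: "(nat \<Rightarrow> real) \<Rightarrow> nat set \<Rightarrow> real" where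
  "min_on x A = (if A = {} then 1 else Min (x ` A))"

definition sugeno :: "nat \<Rightarrow> (nat set \<Rightarrow> real) \<Rightarrow> (nat \<Rightarrow> real) \<Rightarrow> real" where
  "sugeno n \<mu> x = Max {min (min_on x A) (\<mu> A) | A. A \<subseteq> {1..n}}"

definition pos :: "real \<Rightarrow> real" where
  "pos t = max t 0"

definition gamma :: "nat \<Rightarrow> (nat \<Rightarrow> nat \<Rightarrow> real) \<Rightarrow> nat \<Rightarrow> nat set \<Rightarrow> real" where
  "gamma n x k A = Max (x k ` ({1..n} - A))"

definition sigma_eps :: "real \<Rightarrow> real \<Rightarrow> real \<Rightarrow> real" where
  "sigma_eps ai g al = min (pos (al - ai) / 2) (pos (al - g))"

definition nabla_iA :: "nat \<Rightarrow> nat \<Rightarrow> (nat \<Rightarrow> nat \<Rightarrow> real) \<Rightarrow> (nat \<Rightarrow> real) \<Rightarrow> nat \<Rightarrow> nat set \<Rightarrow> real" where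
  "nabla_iA n N x \<alpha> i A = max (pos (gamma n x i A - \<alpha> i))
      (Max ((\<lambda>l. sigma_eps (\<alpha> i) (gamma n x l A) (\<alpha> l)) ` {1..N}))"

definition nabla_i :: "nat \<Rightarrow> nat \<Rightarrow> nat \<Rightarrow> (nat \<Rightarrow> nat \<Rightarrow> real) \<Rightarrow> (nat \<Rightarrow> real) \<Rightarrow> nat \<Rightarrow> real" where
  "nabla_i n q N x \<alpha> i = Min ((\<lambda>A. nabla_iA n N x \<alpha> i A) `
       {A. A \<subset> {1..n} \<and> n - q \<le> card A})"

definition nabla_q :: "nat \<Rightarrow> nat \<Rightarrow> nat \<Rightarrow> (nat \<Rightarrow> nat \<Rightarrow> real) \<Rightarrow> (nat \<Rightarrow> real) \<Rightarrow> real" where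
  "nabla_q n q N x \<alpha> = Max ((\<lambda>i. nabla_i n q N x \<alpha> i) ` {1..N})"

definition eps_op :: "real \<Rightarrow> real \<Rightarrow> real" where
  "eps_op a b = (if a < b then b else 0)"

definition nu_q :: "nat \<Rightarrow> nat \<Rightarrow> nat \<Rightarrow> (nat \<Rightarrow> nat \<Rightarrow> real) \<Rightarrow> (nat \<Rightarrow> real) \<Rightarrow> nat set \<Rightarrow> real" where
  "nu_q n q N x \<alpha> A = Max ((\<lambda>k. eps_op (gamma n x k A) (max (\<alpha> k - nabla_q n q N x \<alpha>) 0)) ` {1..N})"

definition fit_error :: "nat \<Rightarrow> nat \<Rightarrow> (nat \<Rightarrow> nat \<Rightarrow> real) \<Rightarrow> (nat \<Rightarrow> real) \<Rightarrow> (nat set \<Rightarrow> real) \<Rightarrow> real" where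
  "fit_error n N x \<alpha> \<mu> = Max ((\<lambda>k. \<bar>sugeno n \<mu> (x k) - \<alpha> k\<bar>) ` {1..N})"

end

theory Submission
  imports Defs
begin

lemma sug_set_eq: "{min (min_on x A) (\<mu> A) | A. A \<subseteq> {1..n}} = (\<lambda>A. min (min_on x A) (\<mu> A)) ` Pow {1..n}"
  by auto

lemma sugeno_ge:
  assumes "B \<subseteq> {1..n}"
  shows "min (min_on x B) (\<mu> B) \<le> sugeno n \<mu> x"
  unfolding sugeno_def sug_set_eq using assms by (intro Max_ge) auto

lemma sugeno_le:
  assumes "\<And>B. B \<subseteq> {1..n} \<Longrightarrow> min (min_on x B) (\<mu> B) \<le> c"
  shows "sugeno n \<mu> x \<le> c"
  unfolding sugeno_def sug_set_eq using assms by (subst Max_le_iff) auto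

lemma gamma_le:
  assumes "A \<subset> {1..n}" "\<And>j. j \<in> {1..n} \<Longrightarrow> j \<notin> A \<Longrightarrow> x k j \<le> c"
  shows "gamma n x k A \<le> c"
  unfolding gamma_def using assms by (subst Max_le_iff) auto

lemma gamma_lt:
  assumes "A \<subset> {1..n}" "\<And>j. j \<in> {1..n} \<Longrightarrow> j \<notin> A \<Longrightarrow> x k j < c"
  shows "gamma n x k A < c"
  unfolding gamma_def using assms by (subst Max_less_iff) auto

lemma gamma_ge:
  assumes "j \<in> {1..n}" "j \<notin> A"
  shows "x k j \<le> gamma n x k A"
  unfolding gamma_def using assms by (intro Max_ge) auto

lemma gamma_anti:
  assumes "A \<subseteq> B" "B \<subset> {1..n}"
  shows "gamma n x k B \<le> gamma n x k A"
  by (rule gamma_le[OF assms(2)], rule gamma_ge) (use assms in auto)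

lemma S_le_dual:
  assumes cap: "capacity n \<mu>" and A: "A \<subset> {1..n}"
  shows "sugeno n \<mu> (x k) \<le> max (gamma n x k A) (\<mu> A)"
proof (rule sugeno_le)
  fix B assume B: "B \<subseteq> {1..n}"
  show "min (min_on (x k) B) (\<mu> B) \<le> max (gamma n x k A) (\<mu> A)"
  proof (cases "B \<subseteq> A")
    case True
    have "A \<subseteq> {1..n}" using A by auto
    then have "\<mu> B \<le> \<mu> A" using cap True unfolding capacity_def by blast
    then show ?thesis by linarith
  next
    case False
    then obtain j where j: "j \<in> B" "j \<notin> A" by auto
    have "min_on (x k) B \<le> x k j" unfolding min_on_def using j B
      by (auto intro!: Min_le finite_subset[OF B])
    also have "\<dots> \<le> gamma n x k A" using j B by (intro gamma_ge) auto
    finally show ?thesis by linarith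
  qed
qed

lemma exists_A:
  assumes cap: "capacity n \<mu>" and qm: "q_minitive n q \<mu>"
    and xr: "\<forall>i\<in>{1..n}. 0 \<le> x k i \<and> x k i \<le> 1"
    and q: "1 \<le> q" "q \<le> n"
  shows "\<exists>A. A \<subset> {1..n} \<and> n - q \<le> card A \<and> gamma n x k A \<le> sugeno n \<mu> (x k) \<and> \<mu> A \<le> sugeno n \<mu> (x k)"
proof -
  define s where "s = sugeno n \<mu> (x k)"
  define A0 where "A0 = {j\<in>{1..n}. s < x k j}"
  have A0C: "A0 \<subseteq> {1..n}" unfolding A0_def by auto
  have s0: "0 \<le> s"
    using sugeno_ge[of "{}" n "x k" \<mu>] cap unfolding s_def capacity_def min_on_def by auto
  have mu_cap: "\<And>A. A \<subseteq> {1..n} \<Longrightarrow> 0 \<le> \<mu> A \<and> \<mu> A \<le> 1" using cap unfolding capacity_def by auto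
  have mA0: "\<mu> A0 \<le> s"
  proof (cases "A0 = {}")
    case True then show ?thesis using cap s0 unfolding capacity_def by auto
  next
    case False
    have "s < min_on (x k) A0" unfolding min_on_def using False A0C
      by (auto simp: finite_subset A0_def)
    moreover have "min (min_on (x k) A0) (\<mu> A0) \<le> s" unfolding s_def by (rule sugeno_ge[OF A0C])
    ultimately show ?thesis by linarith
  qed
  have A0ne: "A0 \<noteq> {1..n}"
  proof
    assume eq: "A0 = {1..n}"
    have "1 \<in> A0" using eq q by auto
    then have "s < 1" using xr unfolding A0_def by force
    moreover have "\<mu> A0 = 1" using eq cap unfolding capacity_def by auto
    ultimately show False using mA0 by linarith
  qed
  have A0p: "A0 \<subset> {1..n}" using A0C A0ne by auto
  have gA0: "gamma n x k Y \<le> s" if "A0 \<subseteq> Y" "Y \<subset> {1..n}" for Y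
    by (rule gamma_le) (use that in \<open>auto simp: A0_def\<close>)
  show ?thesis
  proof (cases "n - q \<le> card A0")
    case True then show ?thesis using A0p gA0[of A0] mA0 unfolding s_def by auto
  next
    case False
    let ?S = "{\<mu> Y | Y. A0 \<subset> Y \<and> Y \<subseteq> {1..n} \<and> n - q \<le> card Y}"
    have eq: "\<mu> A0 = Min ?S" using qm A0C False unfolding q_minitive_def by auto
    have fin: "finite ?S"
    proof -
      have "?S \<subseteq> \<mu> ` Pow {1..n}" by auto
      then show ?thesis by (rule finite_subset) auto
    qed
    have "\<mu> {1..n} \<in> ?S" using A0p by auto
    then have ne: "?S \<noteq> {}" by blast
    obtain Y where Y: "A0 \<subset> Y" "Y \<subseteq> {1..n}" "n - q \<le> card Y" "\<mu> A0 = \<mu> Y"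
      using Min_in[OF fin ne] eq by auto
    show ?thesis
    proof (cases "Y = {1..n}")
      case True
      then have s1: "1 \<le> s" using Y mA0 cap unfolding capacity_def by auto
      define A' where "A' = {1..n} - {n}"
      have nC: "n \<in> {1..n}" using q by simp
      have A'p: "A' \<subset> {1..n}" unfolding A'_def using nC by blast
      have "card A' = n - 1" unfolding A'_def using nC by simp
      then have cA': "n - q \<le> card A'" using q by linarith
      have "gamma n x k A' \<le> 1" by (rule gamma_le[OF A'p]) (use xr in blast)
      moreover have "\<mu> A' \<le> 1" using mu_cap A'p by blast
      ultimately have "A' \<subset> {1..n} \<and> n - q \<le> card A' \<and> gamma n x k A' \<le> s \<and> \<mu> A' \<le> s"
        using A'p cA' s1 by linarith
      then show ?thesis unfolding s_def by blast
    next
      case False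
      then have "Y \<subset> {1..n}" using Y by auto
      then have "Y \<subset> {1..n} \<and> n - q \<le> card Y \<and> gamma n x k Y \<le> s \<and> \<mu> Y \<le> s"
        using gA0[of Y] Y mA0 by auto
      then show ?thesis unfolding s_def by blast
    qed
  qed
qed

lemma finA: "finite {A. A \<subset> {1..n} \<and> n - q \<le> card A}"
  by (rule finite_subset[of _ "Pow {1..n}"]) auto

lemma lower:
  assumes N: "1 \<le> N"
    and xr: "\<forall>k\<in>{1..N}. \<forall>i\<in>{1..n}. 0 \<le> x k i \<and> x k i \<le> 1"
    and q: "1 \<le> q" "q \<le> n"
    and cap: "capacity n \<mu>" and qm: "q_minitive n q \<mu>"
  shows "nabla_q n q N x \<alpha> \<le> fit_error n N x \<alpha> \<mu>"
proof -
  define \<epsilon> where "\<epsilon> = fit_error n N x \<alpha> \<mu>"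
  have err: "\<And>l. l \<in> {1..N} \<Longrightarrow> \<bar>sugeno n \<mu> (x l) - \<alpha> l\<bar> \<le> \<epsilon>"
    unfolding \<epsilon>_def fit_error_def by (rule Max_ge) auto
  have e0: "0 \<le> \<epsilon>" using err[of 1] N by force
  have "nabla_i n q N x \<alpha> i \<le> \<epsilon>" if i: "i \<in> {1..N}" for i
  proof -
    obtain A where A: "A \<subset> {1..n}" "n - q \<le> card A" "gamma n x i A \<le> sugeno n \<mu> (x i)" "\<mu> A \<le> sugeno n \<mu> (x i)"
      using exists_A[OF cap qm _ q, of x i] xr i by auto
    have "nabla_i n q N x \<alpha> i \<le> nabla_iA n N x \<alpha> i A"
      unfolding nabla_i_def using A finA by (intro Min_le) auto
    also have "\<dots> \<le> \<epsilon>"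
      unfolding nabla_iA_def
    proof (rule max.boundedI)
      show "pos (gamma n x i A - \<alpha> i) \<le> \<epsilon>" using A(3) err[OF i] e0 unfolding pos_def by auto
      have "sigma_eps (\<alpha> i) (gamma n x l A) (\<alpha> l) \<le> \<epsilon>" if l: "l \<in> {1..N}" for l
      proof -
        have Sl: "sugeno n \<mu> (x l) \<le> max (gamma n x l A) (\<mu> A)" by (rule S_le_dual[OF cap A(1)])
        show ?thesis
        proof (rule ccontr)
          assume "\<not> ?thesis"
          then have "\<epsilon> < min (max (\<alpha> l - \<alpha> i) 0 / 2) (max (\<alpha> l - gamma n x l A) 0)"
            unfolding sigma_eps_def pos_def by linarith
          then have "2 * \<epsilon> < max (\<alpha> l - \<alpha> i) 0" "\<epsilon> < max (\<alpha> l - gamma n x l A) 0"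
            by (simp_all add: min_less_iff_conj)
          then have h1: "2 * \<epsilon> < \<alpha> l - \<alpha> i" and h2: "\<epsilon> < \<alpha> l - gamma n x l A"
            using e0 by (auto simp: less_max_iff_disj)
          have el: "\<alpha> l - \<epsilon> \<le> sugeno n \<mu> (x l)" using err[OF l] by linarith
          have ei: "sugeno n \<mu> (x i) \<le> \<alpha> i + \<epsilon>" using err[OF i] by linarith
          have "sugeno n \<mu> (x l) \<le> \<mu> A" using Sl el h2 by (auto simp: max_def split: if_splits)
          then show False using el ei A(4) h1 by linarith
        qed
      qed
      then show "Max ((\<lambda>l. sigma_eps (\<alpha> i) (gamma n x l A) (\<alpha> l)) ` {1..N}) \<le> \<epsilon>"
        using N by (subst Max_le_iff) auto
    qed
    finally show ?thesis .
  qed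
  then show ?thesis unfolding \<epsilon>_def[symmetric] nabla_q_def using N by (subst Max_le_iff) auto
qed

lemma nabla_iA_nonneg: "0 \<le> nabla_iA n N x \<alpha> i A"
  unfolding nabla_iA_def pos_def by auto

lemma nabla_q_nonneg:
  assumes "1 \<le> N" "1 \<le> q" "q \<le> n"
  shows "0 \<le> nabla_q n q N x \<alpha>"
proof -
  have nC: "n \<in> {1..n}" using assms by simp
  have c1: "card ({1..n} - {n}) = n - 1" using nC by simp
  have p1: "{1..n} - {n} \<subset> {1..n}" using nC by blast
  have "n - q \<le> card ({1..n} - {n})" using c1 assms by linarith
  then have "{1..n} - {n} \<in> {A. A \<subset> {1..n} \<and> n - q \<le> card A}" using p1 by blast
  then have "0 \<le> nabla_i n q N x \<alpha> 1" unfolding nabla_i_def using finA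
    by (subst Min_ge_iff) (auto simp: nabla_iA_nonneg)
  also have "\<dots> \<le> nabla_q n q N x \<alpha>" unfolding nabla_q_def using assms by (intro Max_ge) auto
  finally show ?thesis .
qed

lemma nu_ge:
  assumes "k \<in> {1..N}"
  shows "eps_op (gamma n x k A) (max (\<alpha> k - nabla_q n q N x \<alpha>) 0) \<le> nu_q n q N x \<alpha> A"
  unfolding nu_q_def using assms by (intro Max_ge) auto

lemma nu_le:
  assumes "1 \<le> N" "\<And>k. k \<in> {1..N} \<Longrightarrow> eps_op (gamma n x k A) (max (\<alpha> k - nabla_q n q N x \<alpha>) 0) \<le> c"
  shows "nu_q n q N x \<alpha> A \<le> c"
  unfolding nu_q_def using assms by (subst Max_le_iff) auto

theorem theorem5:
  fixes n N q :: nat and x :: "nat \<Rightarrow> nat \<Rightarrow> real" and \<alpha> :: "nat \<Rightarrow> real"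
  assumes "1 \<le> N"
    and "\<forall>k\<in>{1..N}. \<forall>i\<in>{1..n}. 0 \<le> x k i \<and> x k i \<le> 1"
    and "\<forall>k\<in>{1..N}. 0 \<le> \<alpha> k \<and> \<alpha> k \<le> 1"
    and "1 \<le> q" and "q \<le> n"
    and "\<exists>A. A \<subseteq> {1..n} \<and> card A = n - q \<and> nu_q n q N x \<alpha> A = 0"
  shows "(\<exists>\<mu>. capacity n \<mu> \<and> q_minitive n q \<mu> \<and> fit_error n N x \<alpha> \<mu> = nabla_q n q N x \<alpha>) \<and>
         (\<forall>\<mu>. capacity n \<mu> \<and> q_minitive n q \<mu> \<longrightarrow> nabla_q n q N x \<alpha> \<le> fit_error n N x \<alpha> \<mu>)"
proof -
  note N = assms(1) and xr = assms(2) and ar = assms(3) and q = assms(4,5)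
  obtain A00 where A00: "A00 \<subseteq> {1..n}" "card A00 = n - q" "nu_q n q N x \<alpha> A00 = 0"
    using assms(6) by blast
  define D where "D = nabla_q n q N x \<alpha>"
  define \<nu> where "\<nu> = nu_q n q N x \<alpha>"
  define \<mu>0 where "\<mu>0 = (\<lambda>Y. if Y = {1..n} then 1 else \<nu> Y)"
  define SS where "SS = (\<lambda>X. {\<mu>0 Y | Y. X \<subset> Y \<and> Y \<subseteq> {1..n} \<and> n - q \<le> card Y})"
  define \<mu> where "\<mu> = (\<lambda>X. if card X < n - q then Min (SS X) else \<mu>0 X)"
  have nC: "n \<in> {1..n}" using q by simp
  have cardC: "card {1..n} = n" by simp
  have D0: "0 \<le> D" unfolding D_def using nabla_q_nonneg[OF N q] .
  have nu0: "0 \<le> \<nu> A" for A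
  proof -
    have "0 \<le> eps_op (gamma n x 1 A) (max (\<alpha> 1 - D) 0)" unfolding eps_op_def by auto
    also have "\<dots> \<le> \<nu> A" unfolding \<nu>_def D_def using N by (intro nu_ge) auto
    finally show ?thesis .
  qed
  have nu1: "\<nu> A \<le> 1" for A
    unfolding \<nu>_def
  proof (rule nu_le[OF N])
    fix k assume k: "k \<in> {1..N}"
    have "\<alpha> k \<le> 1" using ar k by blast
    then have "max (\<alpha> k - nabla_q n q N x \<alpha>) 0 \<le> 1" using D0 unfolding D_def by linarith
    then show "eps_op (gamma n x k A) (max (\<alpha> k - nabla_q n q N x \<alpha>) 0) \<le> 1"
      unfolding eps_op_def by auto
  qed
  have nu_mono: "\<nu> A \<le> \<nu> B" if AB: "A \<subseteq> B" "B \<subset> {1..n}" for A B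
    unfolding \<nu>_def
  proof (rule nu_le[OF N])
    fix k assume k: "k \<in> {1..N}"
    have g: "gamma n x k B \<le> gamma n x k A" by (rule gamma_anti[OF AB])
    have "eps_op (gamma n x k A) (max (\<alpha> k - nabla_q n q N x \<alpha>) 0)
        \<le> eps_op (gamma n x k B) (max (\<alpha> k - nabla_q n q N x \<alpha>) 0)"
      using g unfolding eps_op_def by auto
    also have "\<dots> \<le> nu_q n q N x \<alpha> B" by (rule nu_ge[OF k])
    finally show "eps_op (gamma n x k A) (max (\<alpha> k - nabla_q n q N x \<alpha>) 0) \<le> nu_q n q N x \<alpha> B" .
  qed
  have mu0_01: "0 \<le> \<mu>0 Y \<and> \<mu>0 Y \<le> 1" for Y
    unfolding \<mu>0_def using nu0 nu1 by auto
  have mu0_mono: "\<mu>0 A \<le> \<mu>0 B" if "A \<subseteq> B" "B \<subseteq> {1..n}" for A B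
  proof (cases "B = {1..n}")
    case True then show ?thesis using mu0_01[of A] unfolding \<mu>0_def by auto
  next
    case False
    then have "A \<noteq> {1..n}" using that by auto
    then show ?thesis using False that nu_mono[of A B] unfolding \<mu>0_def by auto
  qed
  have SSfin: "finite (SS X)" for X
  proof -
    have "SS X \<subseteq> \<mu>0 ` Pow {1..n}" unfolding SS_def by auto
    then show ?thesis by (rule finite_subset) auto
  qed
  have SSC: "\<mu>0 {1..n} \<in> SS X" if "X \<subset> {1..n}" for X
    unfolding SS_def using that by auto
  have small_proper: "X \<subset> {1..n}" if "X \<subseteq> {1..n}" "card X < n - q" for X
    using that cardC by auto
  have muS: "\<mu> X = Min (SS X)" if "card X < n - q" for X
    unfolding \<mu>_def using that by auto
  have muL: "\<mu> X = \<mu>0 X" if "\<not> card X < n - q" for X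
    unfolding \<mu>_def using that by auto
  have SSne: "SS X \<noteq> {}" if "X \<subseteq> {1..n}" "card X < n - q" for X
    using SSC[OF small_proper[OF that]] by blast
  have muS_in: "\<exists>Y. X \<subset> Y \<and> Y \<subseteq> {1..n} \<and> n - q \<le> card Y \<and> \<mu> X = \<mu>0 Y"
    if "X \<subseteq> {1..n}" "card X < n - q" for X
  proof -
    have "Min (SS X) \<in> SS X" by (rule Min_in[OF SSfin SSne[OF that]])
    then show ?thesis using muS[OF that(2)] unfolding SS_def by auto
  qed
  have muS_le: "\<mu> X \<le> \<mu>0 Y" if "X \<subset> Y" "Y \<subseteq> {1..n}" "n - q \<le> card Y" "card X < n - q" for X Y
  proof -
    have "\<mu>0 Y \<in> SS X" unfolding SS_def using that by auto
    then show ?thesis using muS[OF that(4)] SSfin by auto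
  qed
  have mu01: "0 \<le> \<mu> X \<and> \<mu> X \<le> 1" if X: "X \<subseteq> {1..n}" for X
  proof (cases "card X < n - q")
    case True
    then obtain Y where "\<mu> X = \<mu>0 Y" using muS_in[OF X True] by blast
    then show ?thesis using mu0_01 by auto
  next
    case False then show ?thesis using muL mu0_01 by auto
  qed
  have mu_mono: "\<mu> A \<le> \<mu> B" if AB: "A \<subseteq> B" "B \<subseteq> {1..n}" for A B
  proof (cases "card A < n - q")
    case cA: True
    show ?thesis
    proof (cases "card B < n - q")
      case True
      then obtain Y where Y: "B \<subset> Y" "Y \<subseteq> {1..n}" "n - q \<le> card Y" "\<mu> B = \<mu>0 Y"
        using muS_in[OF AB(2) True] by blast
      then have "\<mu> A \<le> \<mu>0 Y" using AB cA by (intro muS_le) auto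
      then show ?thesis using Y by simp
    next
      case False
      then have "A \<noteq> B" using cA by auto
      then have "\<mu> A \<le> \<mu>0 B" using AB cA False by (intro muS_le) auto
      then show ?thesis using muL[OF False] by simp
    qed
  next
    case cA: False
    have "finite B" using AB finite_subset by blast
    then have "card A \<le> card B" using AB card_mono by blast
    then have "\<not> card B < n - q" using cA by linarith
    then show ?thesis using muL cA mu0_mono AB by auto
  qed
  have mu_empty: "\<mu> {} = 0"
  proof (cases "n - q = 0")
    case True
    then have "A00 = {}" using A00 finite_subset[OF A00(1)] by auto
    then have "\<nu> {} = 0" using A00 unfolding \<nu>_def by simp
    moreover have "{} \<noteq> {1..n}" using nC by auto
    ultimately show ?thesis using True muL unfolding \<mu>0_def by auto
  next
    case False
    have A00p: "A00 \<subset> {1..n}" using A00 cardC q by auto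
    have "A00 \<noteq> {}" using False A00 by auto
    then have "\<mu> {} \<le> \<mu>0 A00" using A00 False by (intro muS_le) auto
    also have "\<mu>0 A00 = 0" using A00p A00 unfolding \<mu>0_def \<nu>_def by auto
    finally show ?thesis using mu01[of "{}"] by auto
  qed
  have muLY: "\<mu> Y = \<mu>0 Y" if "n - q \<le> card Y" for Y
    using muL that by simp
  have cap: "capacity n \<mu>"
    unfolding capacity_def
  proof (intro conjI)
    show "\<mu> {} = 0" by (rule mu_empty)
    show "\<mu> {1..n} = 1" using muLY[of "{1..n}"] cardC unfolding \<mu>0_def by simp
    show "\<forall>A. A \<subseteq> {1..n} \<longrightarrow> 0 \<le> \<mu> A \<and> \<mu> A \<le> 1" using mu01 by blast
    show "\<forall>A B. A \<subseteq> B \<and> B \<subseteq> {1..n} \<longrightarrow> \<mu> A \<le> \<mu> B" using mu_mono by blast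
  qed
  have qm: "q_minitive n q \<mu>"
    unfolding q_minitive_def
  proof (intro allI impI)
    fix X assume X: "X \<subseteq> {1..n} \<and> card X < n - q"
    have "{\<mu> Y | Y. X \<subset> Y \<and> Y \<subseteq> {1..n} \<and> n - q \<le> card Y} = SS X"
      unfolding SS_def
    proof (rule set_eqI, rule iffI)
      fix v assume "v \<in> {\<mu> Y | Y. X \<subset> Y \<and> Y \<subseteq> {1..n} \<and> n - q \<le> card Y}"
      then obtain Y where Y: "v = \<mu> Y" "X \<subset> Y" "Y \<subseteq> {1..n}" "n - q \<le> card Y" by blast
      then have "v = \<mu>0 Y" using muLY by simp
      then show "v \<in> {\<mu>0 Y | Y. X \<subset> Y \<and> Y \<subseteq> {1..n} \<and> n - q \<le> card Y}" using Y by blast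
    next
      fix v assume "v \<in> {\<mu>0 Y | Y. X \<subset> Y \<and> Y \<subseteq> {1..n} \<and> n - q \<le> card Y}"
      then obtain Y where Y: "v = \<mu>0 Y" "X \<subset> Y" "Y \<subseteq> {1..n}" "n - q \<le> card Y" by blast
      then have "v = \<mu> Y" using muLY by simp
      then show "v \<in> {\<mu> Y | Y. X \<subset> Y \<and> Y \<subseteq> {1..n} \<and> n - q \<le> card Y}" using Y by blast
    qed
    then show "\<mu> X = Min {\<mu> Y | Y. X \<subset> Y \<and> Y \<subseteq> {1..n} \<and> n - q \<le> card Y}"
      using muS X by simp
  qed
  have err: "\<bar>sugeno n \<mu> (x k) - \<alpha> k\<bar> \<le> D" if k: "k \<in> {1..N}" for k
  proof -
    have ak: "0 \<le> \<alpha> k" "\<alpha> k \<le> 1" using ar k by auto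
    have up: "sugeno n \<mu> (x k) \<le> \<alpha> k + D"
    proof -
      let ?AS = "{A. A \<subset> {1..n} \<and> n - q \<le> card A}"
      have c1: "card ({1..n} - {n}) = n - 1" using nC by simp
      have p1: "{1..n} - {n} \<subset> {1..n}" using nC by blast
      have "n - q \<le> card ({1..n} - {n})" using c1 q by linarith
      then have "{1..n} - {n} \<in> ?AS" using p1 by blast
      then have ASne: "?AS \<noteq> {}" by blast
      have "Min ((\<lambda>A. nabla_iA n N x \<alpha> k A) ` ?AS) \<in> (\<lambda>A. nabla_iA n N x \<alpha> k A) ` ?AS"
        using finA ASne by (intro Min_in) simp_all
      then obtain A where A0: "A \<in> ?AS" and A3: "nabla_iA n N x \<alpha> k A = nabla_i n q N x \<alpha> k"
        unfolding nabla_i_def by (metis (no_types, lifting) imageE)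
      have A: "A \<subset> {1..n}" "n - q \<le> card A" using A0 by simp_all
      have "nabla_i n q N x \<alpha> k \<le> D" unfolding D_def nabla_q_def using k by (intro Max_ge) auto
      then have nk: "nabla_iA n N x \<alpha> k A \<le> D" using A3 by simp
      have g: "gamma n x k A \<le> \<alpha> k + D"
        using nk unfolding nabla_iA_def pos_def by auto
      have sig: "sigma_eps (\<alpha> k) (gamma n x l A) (\<alpha> l) \<le> D" if l: "l \<in> {1..N}" for l
      proof -
        have "sigma_eps (\<alpha> k) (gamma n x l A) (\<alpha> l) \<le>
          Max ((\<lambda>l. sigma_eps (\<alpha> k) (gamma n x l A) (\<alpha> l)) ` {1..N})"
          using l by (intro Max_ge) auto
        then show ?thesis using nk unfolding nabla_iA_def by linarith
      qed
      have "\<nu> A \<le> \<alpha> k + D"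
        unfolding \<nu>_def
      proof (rule nu_le[OF N])
        fix l assume l: "l \<in> {1..N}"
        show "eps_op (gamma n x l A) (max (\<alpha> l - nabla_q n q N x \<alpha>) 0) \<le> \<alpha> k + D"
        proof (cases "gamma n x l A < max (\<alpha> l - D) 0 \<and> 0 < \<alpha> l - D")
          case True
          then have h: "D < \<alpha> l - gamma n x l A" by linarith
          have s: "min (max (\<alpha> l - \<alpha> k) 0 / 2) (max (\<alpha> l - gamma n x l A) 0) \<le> D"
            using sig[OF l] unfolding sigma_eps_def pos_def .
          have "max (\<alpha> l - \<alpha> k) 0 / 2 \<le> D"
          proof (rule ccontr)
            assume "\<not> ?thesis"
            then have "D < min (max (\<alpha> l - \<alpha> k) 0 / 2) (max (\<alpha> l - gamma n x l A) 0)"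
              using h D0 by (simp add: less_max_iff_disj)
            then show False using s by linarith
          qed
          then have "\<alpha> l - \<alpha> k \<le> 2 * D" by simp
          then show ?thesis using True unfolding eps_op_def D_def[symmetric] by auto
        next
          case False
          then have "eps_op (gamma n x l A) (max (\<alpha> l - D) 0) \<le> 0"
            unfolding eps_op_def by auto
          then show ?thesis using ak D0 unfolding D_def[symmetric] by linarith
        qed
      qed
      moreover have "\<mu> A = \<nu> A" using A muL unfolding \<mu>0_def by auto
      moreover have "sugeno n \<mu> (x k) \<le> max (gamma n x k A) (\<mu> A)" by (rule S_le_dual[OF cap A(1)])
      ultimately show ?thesis using g by linarith
    qed
    have lo: "\<alpha> k - D \<le> sugeno n \<mu> (x k)"
    proof (cases "\<alpha> k - D \<le> 0")
      case True
      have "min (min_on (x k) {}) (\<mu> {}) \<le> sugeno n \<mu> (x k)" by (rule sugeno_ge) auto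
      then show ?thesis using True mu_empty unfolding min_on_def by auto
    next
      case False
      define t where "t = \<alpha> k - D"
      have t0: "0 < t" "t \<le> 1" using False D0 ak unfolding t_def by auto
      define B where "B = {j\<in>{1..n}. t \<le> x k j}"
      have BC: "B \<subseteq> {1..n}" unfolding B_def by auto
      have m1: "t \<le> min_on (x k) B"
      proof (cases "B = {}")
        case True then show ?thesis using t0 unfolding min_on_def by auto
      next
        case False then show ?thesis unfolding min_on_def B_def
          by (auto simp: Min_ge_iff)
      qed
      have m2: "t \<le> \<mu> B"
      proof (cases "B = {1..n}")
        case True
        then show ?thesis using t0 muL[of "{1..n}"] cardC unfolding \<mu>0_def by auto
      next
        case False
        then have Bp: "B \<subset> {1..n}" using BC by auto
        have Y: "t \<le> \<mu>0 Y" if "B \<subseteq> Y" "Y \<subseteq> {1..n}" for Y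
        proof (cases "Y = {1..n}")
          case True then show ?thesis using t0 unfolding \<mu>0_def by auto
        next
          case False
          then have Yp: "Y \<subset> {1..n}" using that by auto
          have "gamma n x k Y < t"
            by (rule gamma_lt[OF Yp]) (use that in \<open>auto simp: B_def\<close>)
          then have "eps_op (gamma n x k Y) (max (\<alpha> k - nabla_q n q N x \<alpha>) 0) = t"
            using t0 unfolding eps_op_def t_def D_def by auto
          then have "t \<le> \<nu> Y" using nu_ge[OF k, where A=Y and n=n and x=x and q=q and \<alpha>=\<alpha>] unfolding \<nu>_def by simp
          then show ?thesis using False unfolding \<mu>0_def by simp
        qed
        show ?thesis
        proof (cases "card B < n - q")
          case True
          then obtain Y where "B \<subset> Y" "Y \<subseteq> {1..n}" "\<mu> B = \<mu>0 Y"
            using muS_in[OF BC True] by blast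
          then show ?thesis using Y by auto
        next
          case False then show ?thesis using muL Y[of B] BC by auto
        qed
      qed
      have "min (min_on (x k) B) (\<mu> B) \<le> sugeno n \<mu> (x k)" by (rule sugeno_ge[OF BC])
      then show ?thesis using m1 m2 unfolding t_def by linarith
    qed
    show ?thesis using up lo by linarith
  qed
  have "fit_error n N x \<alpha> \<mu> \<le> D"
    unfolding fit_error_def using N err by (subst Max_le_iff) auto
  moreover have "D \<le> fit_error n N x \<alpha> \<mu>" unfolding D_def by (rule lower[OF N xr q cap qm])
  ultimately have "fit_error n N x \<alpha> \<mu> = nabla_q n q N x \<alpha>" unfolding D_def by linarith
  then show ?thesis using cap qm lower[OF N xr q] by blast
qed

end
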